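(* Assume the setting described in the context. Let $\ldots\sigma_1\xrightarrow{u_1}\sigma_2\xrightarrow{u_2}\cdots\sigma_k\xrightarrow{u_k}\sigma_{k+1}\ldots$ be (a segment of) a walk with $k\ge1$. Suppose that at least one of the following holds: (a) $u_k\notin F_{\sigma_1}$; (b) $k\ge2$ and $u_1=u_k$. Then there exists $i\in[k-1]$ with $u_i\sim u_k$.
   Context: Setting: $\Omega$ is a finite set and $F$ a finite set of flaws, each a nonempty subset of $\Omega$; $F_\sigma=\{f:\sigma\in f\}$. For $\sigma\in\Omega$ and $f\in F_\sigma$ there is a probability distribution $\rho(\cdot\mid f,\sigma)$ with support $A(f,\sigma)$. A walk is a sequence of steps $\sigma\xrightarrow{f}\sigma'$ with $f\in F_\sigma$ and $\sigma'\in A(f,\sigma)$, each step starting at the state where the previous one ended. $\sim$ is a symmetric relation on $F$ (loops allowed), with $\Gamma(f)=\{g:f\sim g\}$. It is assumed that $(F,\sim)$ is a potential causality graph: for every step $\sigma\xrightarrow{f}\sigma'$, $F_{\sigma'}\subseteq(F_\sigma\setminus\{f\})\cup\Gamma(f)$. *)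

theory Defs
  imports "HOL-Probability.Probability_Mass_Function"
begin

definition flaws_at :: "'a set set \<Rightarrow> 'a \<Rightarrow> 'a set set" where
  "flaws_at F \<sigma> = {f \<in> F. \<sigma> \<in> f}"

definition Gam :: "'a set set \<Rightarrow> ('a set \<Rightarrow> 'a set \<Rightarrow> bool) \<Rightarrow> 'a set \<Rightarrow> 'a set set" where
  "Gam F adj f = {g \<in> F. adj f g}"

definition step :: "'a set \<Rightarrow> 'a set set \<Rightarrow> ('a set \<Rightarrow> 'a \<Rightarrow> 'a pmf) \<Rightarrow> 'a \<Rightarrow> 'a set \<Rightarrow> 'a \<Rightarrow> bool" where
  "step \<Omega> F \<rho> \<sigma> f \<sigma>' \<longleftrightarrow> \<sigma> \<in> \<Omega> \<and> f \<in> flaws_at F \<sigma> \<and> \<sigma>' \<in> set_pmf (\<rho> f \<sigma>)"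

definition flaw_setting :: "'a set \<Rightarrow> 'a set set \<Rightarrow> ('a set \<Rightarrow> 'a \<Rightarrow> 'a pmf) \<Rightarrow> bool" where
  "flaw_setting \<Omega> F \<rho> \<longleftrightarrow> finite \<Omega> \<and> finite F \<and> (\<forall>f\<in>F. f \<noteq> {} \<and> f \<subseteq> \<Omega>) \<and>
     (\<forall>\<sigma>\<in>\<Omega>. \<forall>f\<in>flaws_at F \<sigma>. set_pmf (\<rho> f \<sigma>) \<subseteq> \<Omega>)"

definition potential_causality :: "'a set \<Rightarrow> 'a set set \<Rightarrow> ('a set \<Rightarrow> 'a \<Rightarrow> 'a pmf) \<Rightarrow> ('a set \<Rightarrow> 'a set \<Rightarrow> bool) \<Rightarrow> bool" where
  "potential_causality \<Omega> F \<rho> adj \<longleftrightarrow>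
     (\<forall>f g. adj f g \<longrightarrow> f \<in> F \<and> g \<in> F) \<and> (\<forall>f g. adj f g \<longrightarrow> adj g f) \<and>
     (\<forall>\<sigma> f \<sigma>'. step \<Omega> F \<rho> \<sigma> f \<sigma>' \<longrightarrow>
        flaws_at F \<sigma>' \<subseteq> (flaws_at F \<sigma> - {f}) \<union> Gam F adj f)"

end

theory Submission
  imports Defs
begin

theorem lemma2:
  fixes \<Omega> :: "'a set" and F :: "'a set set" and \<rho> :: "'a set \<Rightarrow> 'a \<Rightarrow> 'a pmf"
    and adj :: "'a set \<Rightarrow> 'a set \<Rightarrow> bool"
    and \<sigma> :: "nat \<Rightarrow> 'a" and u :: "nat \<Rightarrow> 'a set" and k :: nat
  assumes "flaw_setting \<Omega> F \<rho>"
    and "potential_causality \<Omega> F \<rho> adj"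
    and "k \<ge> 1"
    and walk: "\<forall>i\<in>{1..k}. step \<Omega> F \<rho> (\<sigma> i) (u i) (\<sigma> (i + 1))"
    and "u k \<notin> flaws_at F (\<sigma> 1) \<or> (k \<ge> 2 \<and> u 1 = u k)"
  shows "\<exists>i\<in>{1..k - 1}. adj (u i) (u k)"
proof (rule ccontr)
  assume na: "\<not> (\<exists>i\<in>{1..k - 1}. adj (u i) (u k))"
  have pc: "\<And>s f s'. step \<Omega> F \<rho> s f s' \<Longrightarrow> flaws_at F s' \<subseteq> (flaws_at F s - {f}) \<union> Gam F adj f"
    using assms(2) unfolding potential_causality_def by blast
  have main: "m \<le> k - 1 \<Longrightarrow> u k \<in> flaws_at F (\<sigma> (k - m)) \<and> (m \<ge> 1 \<longrightarrow> u k \<noteq> u (k - m))" for m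
  proof (induction m)
    case 0
    then show ?case using walk assms(3) unfolding step_def by auto
  next
    case (Suc m)
    then have IH: "u k \<in> flaws_at F (\<sigma> (k - m))" by simp
    define j where "j = k - Suc m"
    have j: "j \<in> {1..k}" "j + 1 = k - m" "j \<in> {1..k-1}" using Suc.prems assms(3) unfolding j_def by auto
    have st: "step \<Omega> F \<rho> (\<sigma> j) (u j) (\<sigma> (j+1))" using walk j by blast
    have "u k \<in> (flaws_at F (\<sigma> j) - {u j}) \<union> Gam F adj (u j)"
      using pc[OF st] IH j(2) by auto
    moreover have "u k \<notin> Gam F adj (u j)" using na j(3) unfolding Gam_def by auto
    ultimately show ?case unfolding j_def by auto
  qed
  from main[of "k-1"] assms(3) have "u k \<in> flaws_at F (\<sigma> 1)" by simp
  moreover have "k \<ge> 2 \<Longrightarrow> u k \<noteq> u 1" using main[of "k-1"] assms(3) by simp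
  ultimately show False using assms(5) by auto
qed

end
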